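(* Let $n\ge1$, let $\mathbf{A}\in\mathbb{R}^{n\times n}$ be symmetric positive semidefinite, $\mathbf{b}\in\mathbb{R}^n$, and let $h(\mathbf{x})=\sum_{i=1}^n\varphi(\mathbf{x}_i)$, where $\varphi:\mathbb{R}\to\mathbb{R}\cup\{+\infty\}$ is proper, lower semicontinuous and possibly nonconvex. Put $f(\mathbf{x})=\tfrac12\mathbf{x}^T\mathbf{A}\mathbf{x}+\mathbf{x}^T\mathbf{b}+h(\mathbf{x})$, and assume $f$ attains its minimum. Write $\mathbf{A}=\mathbf{L}+\mathbf{D}+\mathbf{L}^T$, where $\mathbf{D}$ is the diagonal part and $\mathbf{L}$ the strictly lower triangular part. Fix $\omega\in(0,2)$ and $\theta\ge0$. Set $\mathbf{B}=\mathbf{L}+\tfrac1\omega(\mathbf{D}+\theta\mathbf{I})$ and $\mathbf{C}=\mathbf{L}^T+\tfrac1\omega((\omega-1)\mathbf{D}-\theta\mathbf{I})$. Define $\delta=\min_i\big(\theta/\omega+\tfrac{1-\omega}{\omega}\mathbf{D}_{i,i}\big)$ and assume $\delta\in(0,\infty)$. Given $\mathbf{x}^0$, generate $\mathbf{x}^{k+1}$ from $\mathbf{x}^k$ as follows: set $\mathbf{u}=\mathbf{b}+\mathbf{C}\mathbf{x}^k$, and for $j=1,\dots,n$ successively let $\mathbf{x}^{k+1}_j$ be a global minimizer over $t\in\mathbb{R}$ of $\tfrac12\mathbf{B}_{j,j}t^2+(\mathbf{u}_j+\sum_{i<j}\mathbf{B}_{j,i}\mathbf{x}^{k+1}_i)t+\varphi(t)$.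 Assume these one-dimensional problems are solved globally. Then: (i) $f(\mathbf{x}^{k+1})-f(\mathbf{x}^k)\le-\tfrac\delta2\|\mathbf{x}^{k+1}-\mathbf{x}^k\|^2\le0$ for all $k$; (ii) the method is globally convergent: there exist $\mathbf{g}^k\in\mathbf{A}\mathbf{x}^k+\mathbf{b}+\partial h(\mathbf{x}^k)$ with $\mathbf{g}^k\to\mathbf{0}$ as $k\to\infty$.
   Context: $\|\cdot\|$ is the Euclidean norm. For nonconvex $h$, $\partial h$ denotes the (limiting) subdifferential. *)

theory Defs
  imports "HOL-Analysis.Analysis"
begin

definition proper_fun :: "('a \<Rightarrow> ereal) \<Rightarrow> bool" where
  "proper_fun g \<longleftrightarrow> (\<forall>x. g x \<noteq> -\<infinity>) \<and> (\<exists>x. g x \<noteq> \<infinity>)"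

definition lsc_fun :: "('a::topological_space \<Rightarrow> ereal) \<Rightarrow> bool" where
  "lsc_fun g \<longleftrightarrow> (\<forall>x. g x \<le> Liminf (at x) g)"

definition frechet_subdiff :: "('a::real_inner \<Rightarrow> ereal) \<Rightarrow> 'a \<Rightarrow> 'a set" where
  "frechet_subdiff g x = {v. \<bar>g x\<bar> \<noteq> \<infinity> \<and>
     Liminf (at x) (\<lambda>y. (g y - g x - ereal (v \<bullet> (y - x))) / ereal (norm (y - x))) \<ge> 0}"

definition limiting_subdiff :: "('a::real_inner \<Rightarrow> ereal) \<Rightarrow> 'a \<Rightarrow> 'a set" where
  "limiting_subdiff g x = {v. \<exists>xs vs. xs \<longlonglongrightarrow> x \<and> (\<lambda>k. g (xs k)) \<longlonglongrightarrow> g x \<and>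
     (\<forall>k. vs k \<in> frechet_subdiff g (xs k)) \<and> vs \<longlonglongrightarrow> v}"

definition lowpart :: "real^('n::{finite,linorder})^('n::{finite,linorder}) \<Rightarrow> real^('n::{finite,linorder})^('n::{finite,linorder})" where
  "lowpart A = (\<chi> i j. if j < i then A$i$j else 0)"

definition diagpart :: "real^('n::finite)^'n \<Rightarrow> real^'n^'n" where
  "diagpart A = (\<chi> i j. if i = j then A$i$j else 0)"

definition sepfun :: "(real \<Rightarrow> ereal) \<Rightarrow> real^'n::finite \<Rightarrow> ereal" where
  "sepfun phi x = (\<Sum>i\<in>UNIV. phi (x$i))"

definition objf :: "real^('n::finite)^'n \<Rightarrow> real^'n \<Rightarrow> (real \<Rightarrow> ereal) \<Rightarrow> real^'n \<Rightarrow> ereal" where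
  "objf A b phi x = ereal (1/2 * (x \<bullet> (A *v x)) + x \<bullet> b) + sepfun phi x"

end

theory Submission
  imports Defs
begin



lemma sym_split:
  fixes A :: "'n::{finite,linorder} \<Rightarrow> 'n \<Rightarrow> real"
  assumes s: "\<And>i l. A i l = A l i"
  shows "(\<Sum>i\<in>UNIV. \<Sum>l\<in>UNIV. A i l * z i * z l)
     = (\<Sum>i\<in>UNIV. A i i * (z i)\<^sup>2) + 2 * (\<Sum>i\<in>UNIV. \<Sum>l\<in>UNIV. if i < l then A i l * z i * z l else 0)"
proof -
  have e: "\<And>i l. A i l * z i * z l = (if i < l then A i l * z i * z l else 0)
     + (if i = l then A i l * z i * z l else 0) + (if l < i then A i l * z i * z l else 0)"
    by auto
  have "(\<Sum>i\<in>UNIV. \<Sum>l\<in>UNIV. A i l * z i * z l) =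
     (\<Sum>i\<in>UNIV. \<Sum>l\<in>UNIV. if i < l then A i l * z i * z l else 0)
     + (\<Sum>i\<in>UNIV. \<Sum>l\<in>UNIV. if i = l then A i l * z i * z l else 0)
     + (\<Sum>i\<in>UNIV. \<Sum>l\<in>UNIV. if l < i then A i l * z i * z l else 0)"
    by (subst e) (simp add: sum.distrib)
  also have "(\<Sum>i\<in>UNIV. \<Sum>l\<in>UNIV. if i = l then A i l * z i * z l else 0) = (\<Sum>i\<in>UNIV. A i i * (z i)\<^sup>2)"
    by (simp add: power2_eq_square mult.assoc)
  also have "(\<Sum>i\<in>UNIV. \<Sum>l\<in>UNIV. if l < i then A i l * z i * z l else 0)
      = (\<Sum>l\<in>UNIV. \<Sum>i\<in>UNIV. if l < i then A i l * z i * z l else 0)"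
    by (rule sum.swap)
  also have "\<dots> = (\<Sum>i\<in>UNIV. \<Sum>l\<in>UNIV. if i < l then A i l * z i * z l else 0)"
    by (intro sum.cong refl) (metis s mult.commute mult.assoc)
  finally show ?thesis by simp
qed




lemma quad_expand:
  fixes A :: "real^('n::{finite,linorder})^('n::{finite,linorder})" and z :: "real^('n::{finite,linorder})"
  assumes symA: "transpose A = A"
  shows "z \<bullet> (A *v z) = (\<Sum>i\<in>UNIV. A$i$i * (z$i)\<^sup>2)
     + 2 * (\<Sum>i\<in>UNIV. \<Sum>l\<in>UNIV. if i < l then A$i$l * z$i * z$l else 0)"
proof -
  have s: "\<And>i l. A$i$l = A$l$i"
    by (metis symA transpose_def vec_lambda_beta)
  have "z \<bullet> (A *v z) = (\<Sum>i\<in>UNIV. \<Sum>l\<in>UNIV. A$i$l * z$i * z$l)"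
    by (simp add: inner_vec_def matrix_vector_mult_def sum_distrib_left mult_ac)
  also have "\<dots> = (\<Sum>i\<in>UNIV. A$i$i * (z$i)\<^sup>2)
     + 2 * (\<Sum>i\<in>UNIV. \<Sum>l\<in>UNIV. if i < l then A$i$l * z$i * z$l else 0)"
    by (rule sym_split[where A="\<lambda>i l. A$i$l" and z="\<lambda>i. z$i"]) (rule s)
  finally show ?thesis .
qed

lemma off_ident:
  fixes A :: "real^('n::{finite,linorder})^('n::{finite,linorder})" and x y :: "real^('n::{finite,linorder})"
  assumes symA: "transpose A = A"
  shows "(\<Sum>j\<in>UNIV. (\<Sum>l\<in>UNIV. if j<l then A$j$l*x$l else 0)*(y$j-x$j))
     + (\<Sum>j\<in>UNIV. (\<Sum>i\<in>UNIV. if i<j then A$j$i*y$i else 0)*(y$j-x$j))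
   = (\<Sum>i\<in>UNIV. \<Sum>l\<in>UNIV. if i<l then A$i$l*y$i*y$l else 0)
     - (\<Sum>i\<in>UNIV. \<Sum>l\<in>UNIV. if i<l then A$i$l*x$i*x$l else 0)"
proof -
  have s: "\<And>i l. A$i$l = A$l$i"
    by (metis symA transpose_def vec_lambda_beta)
  have 1: "(\<Sum>j\<in>UNIV. (\<Sum>l\<in>UNIV. if j<l then A$j$l*x$l else 0)*(y$j-x$j))
     = (\<Sum>i\<in>UNIV. \<Sum>l\<in>UNIV. if i<l then A$i$l*x$l*(y$i-x$i) else 0)"
    by (auto simp add: sum_distrib_right intro!: sum.cong)
  have 2: "(\<Sum>j\<in>UNIV. (\<Sum>i\<in>UNIV. if i<j then A$j$i*y$i else 0)*(y$j-x$j))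
     = (\<Sum>j\<in>UNIV. \<Sum>i\<in>UNIV. if i<j then A$j$i*y$i*(y$j-x$j) else 0)"
    by (auto simp add: sum_distrib_right intro!: sum.cong)
  also have "\<dots> = (\<Sum>i\<in>UNIV. \<Sum>j\<in>UNIV. if i<j then A$j$i*y$i*(y$j-x$j) else 0)"
    by (rule sum.swap)
  also have "\<dots> = (\<Sum>i\<in>UNIV. \<Sum>l\<in>UNIV. if i<l then A$i$l*y$i*(y$l-x$l) else 0)"
    by (intro sum.cong refl) (metis s)
  finally have 2: "(\<Sum>j\<in>UNIV. (\<Sum>i\<in>UNIV. if i<j then A$j$i*y$i else 0)*(y$j-x$j))
     = (\<Sum>i\<in>UNIV. \<Sum>l\<in>UNIV. if i<l then A$i$l*y$i*(y$l-x$l) else 0)" .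
  have 3: "(\<Sum>i\<in>UNIV. \<Sum>l\<in>UNIV. if i<l then A$i$l*x$l*(y$i-x$i) else 0)
     + (\<Sum>i\<in>UNIV. \<Sum>l\<in>UNIV. if i<l then A$i$l*y$i*(y$l-x$l) else 0)
     = (\<Sum>i\<in>UNIV. \<Sum>l\<in>UNIV. (if i<l then A$i$l*y$i*y$l else 0) - (if i<l then A$i$l*x$i*x$l else 0))"
    unfolding sum.distrib[symmetric]
    by (intro sum.cong refl) (simp add: algebra_simps)
  show ?thesis
    unfolding 1 2 3 by (simp add: sum_subtractf)
qed




lemma key_identity:
  fixes A :: "real^('n::{finite,linorder})^('n::{finite,linorder})" and x y b :: "real^('n::{finite,linorder})"
  assumes symA: "transpose A = A" and om: "\<omega> \<noteq> 0"
  shows "(\<Sum>j\<in>UNIV.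
     (1/2 * (lowpart A + (1/\<omega>) *\<^sub>R (diagpart A + \<theta> *\<^sub>R mat 1))$j$j * (y$j)\<^sup>2
       + ((b + (transpose (lowpart A) + (1/\<omega>) *\<^sub>R ((\<omega> - 1) *\<^sub>R diagpart A - \<theta> *\<^sub>R mat 1)) *v x)$j
          + (\<Sum>i\<in>{i. i<j}. (lowpart A + (1/\<omega>) *\<^sub>R (diagpart A + \<theta> *\<^sub>R mat 1))$j$i * y$i)) * y$j)
   - (1/2 * (lowpart A + (1/\<omega>) *\<^sub>R (diagpart A + \<theta> *\<^sub>R mat 1))$j$j * (x$j)\<^sup>2
       + ((b + (transpose (lowpart A) + (1/\<omega>) *\<^sub>R ((\<omega> - 1) *\<^sub>R diagpart A - \<theta> *\<^sub>R mat 1)) *v x)$j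
          + (\<Sum>i\<in>{i. i<j}. (lowpart A + (1/\<omega>) *\<^sub>R (diagpart A + \<theta> *\<^sub>R mat 1))$j$i * y$i)) * x$j))
   - ((1/2 * (y \<bullet> (A *v y)) + y \<bullet> b) - (1/2 * (x \<bullet> (A *v x)) + x \<bullet> b))
   = 1/2 * (\<Sum>j\<in>UNIV. (\<theta>/\<omega> + (1-\<omega>)/\<omega> * A$j$j) * (y$j - x$j)\<^sup>2)"
proof -
  have s: "\<And>i l. A$i$l = A$l$i"
    by (metis symA transpose_def vec_lambda_beta)
  have Bjj: "\<And>j. (lowpart A + (1/\<omega>) *\<^sub>R (diagpart A + \<theta> *\<^sub>R mat 1))$j$j = (A$j$j + \<theta>)/\<omega>"
    by (simp add: lowpart_def diagpart_def mat_def divide_simps)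
  have Bs: "\<And>j. (\<Sum>i\<in>{i. i<j}. (lowpart A + (1/\<omega>) *\<^sub>R (diagpart A + \<theta> *\<^sub>R mat 1))$j$i * y$i)
      = (\<Sum>i\<in>UNIV. if i<j then A$j$i*y$i else 0)"
  proof -
    fix j :: 'n
    have "(\<Sum>i\<in>{i. i<j}. (lowpart A + (1/\<omega>) *\<^sub>R (diagpart A + \<theta> *\<^sub>R mat 1))$j$i * y$i)
       = (\<Sum>i\<in>{i. i<j}. A$j$i*y$i)"
      by (intro sum.cong refl) (auto simp: lowpart_def diagpart_def mat_def)
    also have "\<dots> = (\<Sum>i\<in>UNIV. if i<j then A$j$i*y$i else 0)"
      using sum.inter_filter[of UNIV "\<lambda>i. A$j$i*y$i" "\<lambda>i. i<j"] by simp
    finally show "?thesis j" .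
  qed
  have Cx: "\<And>j. ((transpose (lowpart A) + (1/\<omega>) *\<^sub>R ((\<omega> - 1) *\<^sub>R diagpart A - \<theta> *\<^sub>R mat 1)) *v x)$j
     = (\<Sum>l\<in>UNIV. if j<l then A$j$l*x$l else 0) + ((\<omega>-1)*A$j$j - \<theta>)/\<omega> * x$j"
  proof -
    fix j :: 'n
    have "((transpose (lowpart A) + (1/\<omega>) *\<^sub>R ((\<omega> - 1) *\<^sub>R diagpart A - \<theta> *\<^sub>R mat 1)) *v x)$j
       = (\<Sum>l\<in>UNIV. (if j<l then A$j$l*x$l else 0) + (if l = j then ((\<omega>-1)*A$j$j - \<theta>)/\<omega> * x$j else 0))"
      unfolding matrix_vector_mult_def
      by (auto simp: lowpart_def diagpart_def mat_def transpose_def algebra_simps diff_divide_distrib add_divide_distrib s intro!: sum.cong)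
    then show "?thesis j" by (simp add: sum.distrib)
  qed
  have q: "\<And>z. z \<bullet> (A *v z) = (\<Sum>i\<in>UNIV. A$i$i * (z$i)\<^sup>2)
     + 2 * (\<Sum>i\<in>UNIV. \<Sum>l\<in>UNIV. if i < l then A$i$l * z$i * z$l else 0)"
    by (rule quad_expand[OF symA])
  have off: "(\<Sum>j\<in>UNIV. (\<Sum>l\<in>UNIV. if j<l then A$j$l*x$l else 0)*(y$j-x$j))
     + (\<Sum>j\<in>UNIV. (\<Sum>i\<in>UNIV. if i<j then A$j$i*y$i else 0)*(y$j-x$j))
   = (\<Sum>i\<in>UNIV. \<Sum>l\<in>UNIV. if i<l then A$i$l*y$i*y$l else 0)
     - (\<Sum>i\<in>UNIV. \<Sum>l\<in>UNIV. if i<l then A$i$l*x$i*x$l else 0)"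
    by (rule off_ident[OF symA])
  define P where "P j = (\<Sum>l\<in>UNIV. if j<l then A$j$l*x$l else 0)" for j
  define R where "R j = (\<Sum>i\<in>UNIV. if i<j then A$j$i*y$i else 0)" for j
  have lhs: "?thesis \<longleftrightarrow>
     (\<Sum>j\<in>UNIV. (A$j$j + \<theta>)/\<omega>/2 * ((y$j)\<^sup>2 - (x$j)\<^sup>2)
        + (b$j + P j + ((\<omega>-1)*A$j$j - \<theta>)/\<omega> * x$j + R j) * (y$j - x$j))
      - (1/2 * (\<Sum>i\<in>UNIV. A$i$i * ((y$i)\<^sup>2 - (x$i)\<^sup>2))
         + ((\<Sum>i\<in>UNIV. \<Sum>l\<in>UNIV. if i<l then A$i$l*y$i*y$l else 0)
             - (\<Sum>i\<in>UNIV. \<Sum>l\<in>UNIV. if i<l then A$i$l*x$i*x$l else 0))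
         + (\<Sum>j\<in>UNIV. b$j * (y$j - x$j)))
     = 1/2 * (\<Sum>j\<in>UNIV. (\<theta>/\<omega> + (1-\<omega>)/\<omega> * A$j$j) * (y$j - x$j)\<^sup>2)"
  proof -
    have e1: "(\<Sum>j\<in>UNIV.
     (1/2 * (lowpart A + (1/\<omega>) *\<^sub>R (diagpart A + \<theta> *\<^sub>R mat 1))$j$j * (y$j)\<^sup>2
       + ((b + (transpose (lowpart A) + (1/\<omega>) *\<^sub>R ((\<omega> - 1) *\<^sub>R diagpart A - \<theta> *\<^sub>R mat 1)) *v x)$j
          + (\<Sum>i\<in>{i. i<j}. (lowpart A + (1/\<omega>) *\<^sub>R (diagpart A + \<theta> *\<^sub>R mat 1))$j$i * y$i)) * y$j)
   - (1/2 * (lowpart A + (1/\<omega>) *\<^sub>R (diagpart A + \<theta> *\<^sub>R mat 1))$j$j * (x$j)\<^sup>2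
       + ((b + (transpose (lowpart A) + (1/\<omega>) *\<^sub>R ((\<omega> - 1) *\<^sub>R diagpart A - \<theta> *\<^sub>R mat 1)) *v x)$j
          + (\<Sum>i\<in>{i. i<j}. (lowpart A + (1/\<omega>) *\<^sub>R (diagpart A + \<theta> *\<^sub>R mat 1))$j$i * y$i)) * x$j))
      = (\<Sum>j\<in>UNIV. (A$j$j + \<theta>)/\<omega>/2 * ((y$j)\<^sup>2 - (x$j)\<^sup>2)
        + (b$j + P j + ((\<omega>-1)*A$j$j - \<theta>)/\<omega> * x$j + R j) * (y$j - x$j))"
      by (intro sum.cong refl) (unfold Bjj Bs, unfold vector_add_component[of b] Cx, simp add: P_def R_def field_simps om power2_eq_square)
    have e2: "(1/2 * (y \<bullet> (A *v y)) + y \<bullet> b) - (1/2 * (x \<bullet> (A *v x)) + x \<bullet> b)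
      = 1/2 * (\<Sum>i\<in>UNIV. A$i$i * ((y$i)\<^sup>2 - (x$i)\<^sup>2))
         + ((\<Sum>i\<in>UNIV. \<Sum>l\<in>UNIV. if i<l then A$i$l*y$i*y$l else 0)
             - (\<Sum>i\<in>UNIV. \<Sum>l\<in>UNIV. if i<l then A$i$l*x$i*x$l else 0))
         + (\<Sum>j\<in>UNIV. b$j * (y$j - x$j))"
      unfolding q by (simp add: inner_vec_def algebra_simps sum_subtractf sum.distrib)
    show ?thesis unfolding e1 e2 ..
  qed
  have off': "(\<Sum>j\<in>UNIV. P j * (y$j-x$j)) + (\<Sum>j\<in>UNIV. R j * (y$j-x$j))
   = (\<Sum>i\<in>UNIV. \<Sum>l\<in>UNIV. if i<l then A$i$l*y$i*y$l else 0)
     - (\<Sum>i\<in>UNIV. \<Sum>l\<in>UNIV. if i<l then A$i$l*x$i*x$l else 0)"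
    using off unfolding P_def R_def .
  have diag: "(\<Sum>j\<in>UNIV. (A$j$j + \<theta>)/\<omega>/2 * ((y$j)\<^sup>2 - (x$j)\<^sup>2)
        + (b$j + P j + ((\<omega>-1)*A$j$j - \<theta>)/\<omega> * x$j + R j) * (y$j - x$j))
     = (\<Sum>j\<in>UNIV. 1/2 * A$j$j * ((y$j)\<^sup>2 - (x$j)\<^sup>2) + b$j * (y$j - x$j)
         + 1/2 * ((\<theta>/\<omega> + (1-\<omega>)/\<omega> * A$j$j) * (y$j - x$j)\<^sup>2))
       + ((\<Sum>j\<in>UNIV. P j * (y$j-x$j)) + (\<Sum>j\<in>UNIV. R j * (y$j-x$j)))"
    unfolding sum.distrib[symmetric]
    by (intro sum.cong refl) (simp add: field_simps power2_eq_square om)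
  have split3: "(\<Sum>j\<in>UNIV. 1/2 * A$j$j * ((y$j)\<^sup>2 - (x$j)\<^sup>2) + b$j * (y$j - x$j)
         + 1/2 * ((\<theta>/\<omega> + (1-\<omega>)/\<omega> * A$j$j) * (y$j - x$j)\<^sup>2))
     = 1/2 * (\<Sum>i\<in>UNIV. A$i$i * ((y$i)\<^sup>2 - (x$i)\<^sup>2)) + (\<Sum>j\<in>UNIV. b$j * (y$j - x$j))
       + 1/2 * (\<Sum>j\<in>UNIV. (\<theta>/\<omega> + (1-\<omega>)/\<omega> * A$j$j) * (y$j - x$j)\<^sup>2)"
    by (simp add: sum.distrib sum_distrib_left mult.assoc)
  show ?thesis
    unfolding lhs diag off' split3 by linarith
qed




lemma ereal_fin_cases:
  fixes e :: ereal
  assumes "e \<noteq> \<infinity>" "e \<noteq> -\<infinity>"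
  shows "e = ereal (real_of_ereal e)"
  using assms by (cases e) auto

lemma sepfun_fin:
  assumes "\<And>j. phi (z$j) \<noteq> \<infinity>" "\<And>t. phi t \<noteq> -\<infinity>"
  shows "sepfun phi z = ereal (\<Sum>j\<in>UNIV. real_of_ereal (phi (z$j)))"
proof -
  have "sepfun phi z = (\<Sum>j\<in>UNIV. ereal (real_of_ereal (phi (z$j))))"
    unfolding sepfun_def using assms by (intro sum.cong refl) (rule ereal_fin_cases; auto)
  then show ?thesis by simp
qed

lemma sepfun_inf:
  fixes z :: "real^'n::finite"
  assumes "phi (z$j) = \<infinity>"
  shows "sepfun phi z = \<infinity>"
  unfolding sepfun_def sum_Pinfty using assms by auto

lemma matrix_split:
  fixes A :: "real^('n::{finite,linorder})^('n::{finite,linorder})"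
  assumes symA: "transpose A = A" and om: "\<omega> \<noteq> 0"
  shows "A = (lowpart A + (1/\<omega>) *\<^sub>R (diagpart A + \<theta> *\<^sub>R mat 1))
           + (transpose (lowpart A) + (1/\<omega>) *\<^sub>R ((\<omega> - 1) *\<^sub>R diagpart A - \<theta> *\<^sub>R mat 1))"
proof -
  have s: "\<And>i l. A$i$l = A$l$i"
    by (metis symA transpose_def vec_lambda_beta)
  show ?thesis
    unfolding vec_eq_iff
  proof (intro allI)
    fix i l :: 'n
    consider "i < l" | "i = l" | "l < i" using less_linear by blast
    then show "A$i$l = ((lowpart A + (1/\<omega>) *\<^sub>R (diagpart A + \<theta> *\<^sub>R mat 1))
           + (transpose (lowpart A) + (1/\<omega>) *\<^sub>R ((\<omega> - 1) *\<^sub>R diagpart A - \<theta> *\<^sub>R mat 1)))$i$l"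
      by cases (auto simp: lowpart_def diagpart_def mat_def transpose_def s field_simps om)
  qed
qed

lemma Bmv:
  fixes A :: "real^('n::{finite,linorder})^('n::{finite,linorder})"
  shows "((lowpart A + (1/\<omega>) *\<^sub>R (diagpart A + \<theta> *\<^sub>R mat 1)) *v y)$j
     = (lowpart A + (1/\<omega>) *\<^sub>R (diagpart A + \<theta> *\<^sub>R mat 1))$j$j * y$j
       + (\<Sum>i\<in>{i. i<j}. (lowpart A + (1/\<omega>) *\<^sub>R (diagpart A + \<theta> *\<^sub>R mat 1))$j$i * y$i)"
proof -
  let ?B = "lowpart A + (1/\<omega>) *\<^sub>R (diagpart A + \<theta> *\<^sub>R mat 1)"
  have z: "\<And>i. j < i \<Longrightarrow> ?B$j$i = 0"
    by (auto simp: lowpart_def diagpart_def mat_def)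
  have U: "(UNIV::'n set) = insert j ({i. i<j} \<union> {i. j<i})"
    using less_linear by auto
  have "(?B *v y)$j = (\<Sum>i\<in>insert j ({i. i<j} \<union> {i. j<i}). ?B$j$i * y$i)"
    unfolding matrix_vector_mult_def by (subst U[symmetric]) simp
  also have "\<dots> = ?B$j$j * y$j + (\<Sum>i\<in>{i. i<j} \<union> {i. j<i}. ?B$j$i * y$i)"
    by (subst sum.insert) auto
  also have "(\<Sum>i\<in>{i. i<j} \<union> {i. j<i}. ?B$j$i * y$i) = (\<Sum>i\<in>{i. i<j}. ?B$j$i * y$i) + (\<Sum>i\<in>{i. j<i}. ?B$j$i * y$i)"
    by (rule sum.union_disjoint) auto
  also have "(\<Sum>i\<in>{i. j<i}. ?B$j$i * y$i) = 0"
    using z by simp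
  finally show ?thesis by simp
qed




lemma frechet_from_quad:
  fixes hs :: "'a::euclidean_space \<Rightarrow> ereal" and y v :: 'a
  assumes hy: "hs y = ereal c"
    and lb: "\<And>z. ereal (c + v \<bullet> (z - y) - M * (norm (z - y))\<^sup>2) \<le> hs z"
  shows "v \<in> frechet_subdiff hs y"
proof -
  let ?F = "\<lambda>z. (hs z - hs y - ereal (v \<bullet> (z - y))) / ereal (norm (z - y))"
  have pw: "ereal (- M * norm (z - y)) \<le> ?F z" if "z \<noteq> y" for z
  proof -
    have n: "norm (z - y) > 0" using that by simp
    show ?thesis
    proof (cases "hs z")
      case PInf
      then show ?thesis using n by (simp add: hy)
    next
      case MInf
      then show ?thesis using lb[of z] by simp
    next
      case (real r)
      have i: "c + v \<bullet> (z - y) - M * (norm (z - y))\<^sup>2 \<le> r" using lb[of z] real by simp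
      have "- M * norm (z - y) \<le> (r - c - v \<bullet> (z - y)) / norm (z - y)"
        using n i by (simp add: le_divide_eq power2_eq_square algebra_simps)
      then show ?thesis using real n by (simp add: hy)
    qed
  qed
  have ev: "eventually (\<lambda>z. ereal (- M * norm (z - y)) \<le> ?F z) (at y)"
    unfolding eventually_at_filter by (rule always_eventually) (use pw in simp)
  have lim: "((\<lambda>z. ereal (- M * norm (z - y))) \<longlongrightarrow> ereal 0) (at y)"
  proof -
    have "((\<lambda>z. z - y) \<longlongrightarrow> y - y) (at y)" by (intro tendsto_intros)
    then have "((\<lambda>z. norm (z - y)) \<longlongrightarrow> norm (y - y)) (at y)" by (rule tendsto_norm)
    then have "((\<lambda>z. - M * norm (z - y)) \<longlongrightarrow> - M * norm (y - y)) (at y)" by (intro tendsto_mult tendsto_const)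
    then have "((\<lambda>z. - M * norm (z - y)) \<longlongrightarrow> 0) (at y)" by simp
    then show ?thesis by (simp add: lim_ereal)
  qed
  have "Liminf (at y) (\<lambda>z. ereal (- M * norm (z - y))) = ereal 0"
    by (rule lim_imp_Liminf[OF _ lim]) simp
  then have "0 \<le> Liminf (at y) ?F"
    using Liminf_mono[OF ev] by (simp add: zero_ereal_def)
  then show ?thesis
    unfolding frechet_subdiff_def using hy by simp
qed




lemma coord_alg:
  fixes p r B c Y t M v :: real
  assumes h: "1/2 * B * Y\<^sup>2 + c * Y + p \<le> 1/2 * B * t\<^sup>2 + c * t + r"
    and v: "v = - (B * Y + c)" and BM: "B \<le> M"
  shows "p + v * (t - Y) - M/2 * (t - Y)\<^sup>2 \<le> r"
proof -
  have e: "v * (t-Y) - B/2*(t-Y)\<^sup>2 = (1/2*B*Y\<^sup>2 + c*Y) - (1/2*B*t\<^sup>2 + c*t)"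
    by (simp add: v power2_eq_square algebra_simps)
  have e2: "M/2*(t-Y)\<^sup>2 = B/2*(t-Y)\<^sup>2 + (M-B)/2*(t-Y)\<^sup>2"
    by (simp add: algebra_simps add_divide_distrib diff_divide_distrib)
  have "0 \<le> (M-B)/2*(t-Y)\<^sup>2" using BM by simp
  then show ?thesis using e e2 h by linarith
qed

lemma sum_not_minf:
  fixes f :: "'a \<Rightarrow> ereal"
  assumes "\<And>i. f i \<noteq> -\<infinity>"
  shows "(\<Sum>i\<in>S. f i) \<noteq> -\<infinity>"
  using assms by (induction S rule: infinite_finite_induct) auto

theorem theorem4:
  fixes A :: "real^('n::{finite,linorder})^('n::{finite,linorder})" and b :: "real^('n::{finite,linorder})"
    and phi :: "real \<Rightarrow> ereal" and \<omega> \<theta> :: real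
    and x :: "nat \<Rightarrow> real^('n::{finite,linorder})"
  assumes symA: "transpose A = A"
    and psdA: "\<forall>v. v \<bullet> (A *v v) \<ge> 0"
    and proper: "proper_fun phi"
    and lsc: "lsc_fun phi"
    and attains: "\<exists>xs. \<forall>y. objf A b phi xs \<le> objf A b phi y"
    and omega: "0 < \<omega>" "\<omega> < 2"
    and theta: "\<theta> \<ge> 0"
    and delta_pos: "Min (range (\<lambda>i. \<theta> / \<omega> + (1 - \<omega>) / \<omega> * A$i$i)) > 0"
    and iter: "\<And>k j t.
      (let B = lowpart A + (1/\<omega>) *\<^sub>R (diagpart A + \<theta> *\<^sub>R mat 1);
           C = transpose (lowpart A) + (1/\<omega>) *\<^sub>R ((\<omega> - 1) *\<^sub>R diagpart A - \<theta> *\<^sub>R mat 1);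
           u = b + C *v x k;
           q = (\<lambda>s. 1/2 * B$j$j * s\<^sup>2 + (u$j + (\<Sum>i\<in>{i. i < j}. B$j$i * x (Suc k)$i)) * s)
       in ereal (q (x (Suc k)$j)) + phi (x (Suc k)$j) \<le> ereal (q t) + phi t)"
  shows "(\<forall>k. objf A b phi (x (Suc k)) - objf A b phi (x k)
              \<le> ereal (- (Min (range (\<lambda>i. \<theta> / \<omega> + (1 - \<omega>) / \<omega> * A$i$i))) / 2
                        * (norm (x (Suc k) - x k))\<^sup>2)
          \<and> - (Min (range (\<lambda>i. \<theta> / \<omega> + (1 - \<omega>) / \<omega> * A$i$i))) / 2
                        * (norm (x (Suc k) - x k))\<^sup>2 \<le> 0)
      \<and> (\<exists>g :: nat \<Rightarrow> real^('n::{finite,linorder}).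
          (\<forall>k\<ge>1. g k - (A *v x k + b) \<in> limiting_subdiff (sepfun phi) (x k))
          \<and> g \<longlonglongrightarrow> 0)"
proof -
  define \<delta> where "\<delta> = Min (range (\<lambda>i. \<theta> / \<omega> + (1 - \<omega>) / \<omega> * A$i$i))"
  define Bm where "Bm = lowpart A + (1/\<omega>) *\<^sub>R (diagpart A + \<theta> *\<^sub>R mat 1)"
  define Cm where "Cm = transpose (lowpart A) + (1/\<omega>) *\<^sub>R ((\<omega> - 1) *\<^sub>R diagpart A - \<theta> *\<^sub>R mat 1)"
  define qk where "qk k j s = 1/2 * Bm$j$j * s\<^sup>2 + ((b + Cm *v x k)$j + (\<Sum>i\<in>{i. i < j}. Bm$j$i * x (Suc k)$i)) * s" for k j s
  define Q where "Q z = 1/2 * (z \<bullet> (A *v z)) + z \<bullet> b" for z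
  have om0: "\<omega> \<noteq> 0" using omega by simp
  have it: "\<And>k j t. ereal (qk k j (x (Suc k)$j)) + phi (x (Suc k)$j) \<le> ereal (qk k j t) + phi t"
    using iter unfolding Let_def qk_def Bm_def Cm_def .
  have ninf: "\<And>t. phi t \<noteq> -\<infinity>" using proper unfolding proper_fun_def by auto
  obtain t0 where t0: "phi t0 \<noteq> \<infinity>" using proper unfolding proper_fun_def by auto
  have fin: "phi (x (Suc k)$j) \<noteq> \<infinity>" for k j
  proof
    assume a: "phi (x (Suc k)$j) = \<infinity>"
    have "\<infinity> \<le> ereal (qk k j t0) + phi t0" using it[of k j t0] a by simp
    then have "ereal (qk k j t0) + phi t0 = \<infinity>" by simp
    with t0 ninf[of t0] show False by (cases "phi t0") auto
  qed
  define py where "py k j = real_of_ereal (phi (x (Suc k)$j))" for k j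
  have phiy: "phi (x (Suc k)$j) = ereal (py k j)" for k j
    unfolding py_def using fin ninf by (rule ereal_fin_cases)
  have objfy: "objf A b phi (x (Suc k)) = ereal (Q (x (Suc k)) + (\<Sum>j\<in>UNIV. py k j))" for k
    unfolding objf_def Q_def py_def using sepfun_fin[of phi "x (Suc k)", OF fin[of k] ninf] by simp
  have dw: "\<delta> \<le> \<theta> / \<omega> + (1 - \<omega>) / \<omega> * A$i$i" for i
    unfolding \<delta>_def by (rule Min_le) auto
  have ns: "(norm z)\<^sup>2 = (\<Sum>j\<in>UNIV. (z$j)\<^sup>2)" for z :: "real^('n::{finite,linorder})"
    unfolding power2_norm_eq_inner inner_vec_def by (simp add: power2_eq_square)
  have KI: "(\<Sum>j\<in>UNIV. qk k j (x (Suc k)$j) - qk k j (x k$j)) - (Q (x (Suc k)) - Q (x k))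
     = 1/2 * (\<Sum>j\<in>UNIV. (\<theta>/\<omega> + (1-\<omega>)/\<omega> * A$j$j) * (x (Suc k)$j - x k$j)\<^sup>2)" for k
    unfolding qk_def Q_def Bm_def Cm_def by (rule key_identity[OF symA om0])
  have decr: "objf A b phi (x (Suc k)) - objf A b phi (x k) \<le> ereal (- \<delta> / 2 * (norm (x (Suc k) - x k))\<^sup>2)" for k
  proof (cases "\<exists>j. phi (x k$j) = \<infinity>")
    case True
    then obtain j where "phi (x k$j) = \<infinity>" by blast
    then have "sepfun phi (x k) = \<infinity>" by (rule sepfun_inf)
    then have "objf A b phi (x k) = \<infinity>" unfolding objf_def by simp
    then show ?thesis unfolding objfy by simp
  next
    case False
    then have finx: "\<And>j. phi (x k$j) \<noteq> \<infinity>" by blast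
    define px where "px j = real_of_ereal (phi (x k$j))" for j
    have phix: "phi (x k$j) = ereal (px j)" for j
      unfolding px_def using finx ninf by (rule ereal_fin_cases)
    have objfx: "objf A b phi (x k) = ereal (Q (x k) + (\<Sum>j\<in>UNIV. px j))"
      unfolding objf_def Q_def px_def using sepfun_fin[of phi "x k", OF finx ninf] by simp
    have cj: "qk k j (x (Suc k)$j) + py k j \<le> qk k j (x k$j) + px j" for j
      using it[of k j "x k$j"] unfolding phiy phix by simp
    have "(\<Sum>j\<in>UNIV. qk k j (x (Suc k)$j) + py k j) \<le> (\<Sum>j\<in>UNIV. qk k j (x k$j) + px j)"
      by (rule sum_mono) (rule cj)
    then have s1: "(\<Sum>j\<in>UNIV. qk k j (x (Suc k)$j) - qk k j (x k$j)) + (\<Sum>j\<in>UNIV. py k j) - (\<Sum>j\<in>UNIV. px j) \<le> 0"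
      by (simp add: sum.distrib sum_subtractf)
    have s2: "\<delta> * (\<Sum>j\<in>UNIV. (x (Suc k)$j - x k$j)\<^sup>2) \<le> (\<Sum>j\<in>UNIV. (\<theta>/\<omega> + (1-\<omega>)/\<omega> * A$j$j) * (x (Suc k)$j - x k$j)\<^sup>2)"
      unfolding sum_distrib_left by (rule sum_mono) (rule mult_right_mono[OF dw], simp)
    have "Q (x (Suc k)) + (\<Sum>j\<in>UNIV. py k j) - (Q (x k) + (\<Sum>j\<in>UNIV. px j)) \<le> - \<delta> / 2 * (norm (x (Suc k) - x k))\<^sup>2"
      using s1 s2 KI[of k] unfolding ns by simp
    then show ?thesis unfolding objfy objfx by simp
  qed
  have dpos: "\<delta> > 0" using delta_pos unfolding \<delta>_def .
  have part1: "\<forall>k. objf A b phi (x (Suc k)) - objf A b phi (x k) \<le> ereal (- \<delta> / 2 * (norm (x (Suc k) - x k))\<^sup>2)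
      \<and> - \<delta> / 2 * (norm (x (Suc k) - x k))\<^sup>2 \<le> 0"
    using decr dpos by simp
  obtain xs where xs: "\<forall>y. objf A b phi xs \<le> objf A b phi y" using attains by blast
  have "objf A b phi xs \<noteq> -\<infinity>"
  proof -
    have "sepfun phi xs \<noteq> -\<infinity>" unfolding sepfun_def using ninf by (rule sum_not_minf)
    then show ?thesis unfolding objf_def by simp
  qed
  moreover have "objf A b phi xs \<noteq> \<infinity>" using xs[rule_format, of "x (Suc 0)"] unfolding objfy by auto
  ultimately obtain fs where fs: "objf A b phi xs = ereal fs" by (cases "objf A b phi xs") auto
  define F where "F k = Q (x (Suc k)) + (\<Sum>j\<in>UNIV. py k j)" for k
  have Flow: "fs \<le> F k" for k using xs[rule_format, of "x (Suc k)"] unfolding objfy fs F_def by simp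
  define e where "e k = \<delta> / 2 * (norm (x (Suc (Suc k)) - x (Suc k)))\<^sup>2" for k
  have Fstep: "F (Suc k) \<le> F k - e k" for k
    using decr[of "Suc k"] unfolding objfy F_def e_def by simp
  have tel: "F n + (\<Sum>k<n. e k) \<le> F 0" for n
  proof (induction n)
    case 0 then show ?case by simp
  next
    case (Suc n) then show ?case using Fstep[of n] by simp
  qed
  have e0: "0 \<le> e k" for k unfolding e_def using dpos by simp
  have bnd: "sum e {..<n} \<le> F 0 - fs" for n
    using tel[of n] Flow[of n] by linarith
  have "summable e"
    by (rule summableI_nonneg_bounded[where x="F 0 - fs"]) (use e0 bnd in auto)
  then have "e \<longlonglongrightarrow> 0" by (rule summable_LIMSEQ_zero)
  then have "(\<lambda>k. (2/\<delta>) * e k) \<longlonglongrightarrow> (2/\<delta>) * 0" by (intro tendsto_mult tendsto_const)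
  then have "(\<lambda>k. (norm (x (Suc (Suc k)) - x (Suc k)))\<^sup>2) \<longlonglongrightarrow> 0"
    unfolding e_def using dpos by simp
  then have "(\<lambda>k. sqrt ((norm (x (Suc (Suc k)) - x (Suc k)))\<^sup>2)) \<longlonglongrightarrow> sqrt 0"
    by (rule tendsto_real_sqrt)
  then have "(\<lambda>k. norm (x (Suc (Suc k)) - x (Suc k))) \<longlonglongrightarrow> 0" by simp
  then have "(\<lambda>k. x (Suc (Suc k)) - x (Suc k)) \<longlonglongrightarrow> 0" by (rule tendsto_norm_zero_cancel)
  then have "(\<lambda>k. Cm *v (x (Suc (Suc k)) - x (Suc k))) \<longlonglongrightarrow> Cm *v 0"
    by (rule bounded_linear.tendsto[OF matrix_vector_mul_bounded_linear])
  then have gl: "(\<lambda>k. Cm *v (x (Suc (Suc k)) - x (Suc k))) \<longlonglongrightarrow> 0" by simp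
  define g where "g k = (if k = 0 then 0 else Cm *v (x k - x (k - 1)))" for k
  have "(\<lambda>k. g (Suc (Suc k))) \<longlonglongrightarrow> 0" using gl unfolding g_def by simp
  then have "(\<lambda>k. g (Suc k)) \<longlonglongrightarrow> 0" by (rule LIMSEQ_imp_Suc[of "\<lambda>k. g (Suc k)"])
  then have glim: "g \<longlonglongrightarrow> 0" by (rule LIMSEQ_imp_Suc)
  have gsub: "g k - (A *v x k + b) \<in> limiting_subdiff (sepfun phi) (x k)" if k1: "k \<ge> 1" for k
  proof -
    obtain m where m: "k = Suc m" using k1 by (cases k) auto
    let ?y = "x (Suc m)"
    define v where "v = - (Bm *v ?y + b + Cm *v x m)"
    have AB: "A = Bm + Cm" unfolding Bm_def Cm_def by (rule matrix_split[OF symA om0])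
    have gv: "g k - (A *v x k + b) = v"
      unfolding g_def v_def m AB by (simp add: algebra_simps matrix_vector_mult_add_rdistrib matrix_vector_mult_diff_distrib)
    define M where "M = (\<Sum>j\<in>UNIV. \<bar>Bm$j$j\<bar>)"
    have Mge: "Bm$j$j \<le> M" for j
    proof -
      have "\<bar>Bm$j$j\<bar> \<le> M" unfolding M_def by (rule member_le_sum) auto
      then show ?thesis by simp
    qed
    have coord: "ereal (py m j + v$j * (t - ?y$j) - M/2 * (t - ?y$j)\<^sup>2) \<le> phi t" for j t
    proof (cases "phi t")
      case (real r)
      have c: "qk m j (?y$j) + py m j \<le> qk m j t + r"
        using it[of m j t] unfolding phiy real by simp
      have vj: "v$j = - (Bm$j$j * ?y$j + ((b + Cm *v x m)$j + (\<Sum>i\<in>{i. i < j}. Bm$j$i * ?y$i)))"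
        unfolding v_def Bm_def using Bmv[of A \<omega> \<theta> ?y j] by simp
      have sq: "0 \<le> (M - Bm$j$j)/2 * (t - ?y$j)\<^sup>2" using Mge[of j] by simp
      have "py m j + v$j * (t - ?y$j) - M/2 * (t - ?y$j)\<^sup>2 \<le> r"
        by (rule coord_alg[OF c[unfolded qk_def] vj Mge[of j]])
      then show ?thesis using real by simp
    qed (use ninf in auto)
    have lb: "ereal ((\<Sum>j\<in>UNIV. py m j) + v \<bullet> (z - ?y) - M/2 * (norm (z - ?y))\<^sup>2) \<le> sepfun phi z" for z
    proof -
      have "ereal ((\<Sum>j\<in>UNIV. py m j) + v \<bullet> (z - ?y) - M/2 * (norm (z - ?y))\<^sup>2)
          = (\<Sum>j\<in>UNIV. ereal (py m j + v$j * (z$j - ?y$j) - M/2 * (z$j - ?y$j)\<^sup>2))"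
        unfolding ns sum_ereal by (simp add: inner_vec_def sum.distrib sum_subtractf sum_distrib_left)
      also have "\<dots> \<le> (\<Sum>j\<in>UNIV. phi (z$j))"
        by (rule sum_mono) (rule coord)
      finally show ?thesis unfolding sepfun_def .
    qed
    have hy: "sepfun phi ?y = ereal (\<Sum>j\<in>UNIV. py m j)"
      unfolding py_def by (rule sepfun_fin[of phi "x (Suc m)", OF fin[of m] ninf])
    have fr: "v \<in> frechet_subdiff (sepfun phi) ?y"
      by (rule frechet_from_quad[of "sepfun phi" "x (Suc m)", OF hy, where M="M/2"]) (rule lb)
    have fr': "v \<in> frechet_subdiff (sepfun phi) (x k)" using fr m by simp
    show ?thesis
      unfolding gv limiting_subdiff_def
      by (rule CollectI, rule exI[of _ "\<lambda>_. x k"], rule exI[of _ "\<lambda>_. v"]) (simp add: fr')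
  qed
  show ?thesis
    using part1 gsub glim unfolding \<delta>_def by blast
qed


end
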